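(* Let $R$ be a commutative ring and $\mathcal{A}=\{L_1,\dots,L_n\}$ an arrangement of affine lines in $\mathbb{C}^2$ with parallel class decomposition $\mathcal{A}=\mathcal{A}_1\sqcup\dots\sqcup\mathcal{A}_s$. Let $\mathcal{C}_s$ be an arrangement of $s$ distinct lines through the origin of $\mathbb{C}^2$, with Orlik–Solomon generators $\tilde e_1,\dots,\tilde e_s$. Then there exists an $R$-algebra homomorphism $\Delta_{tot}:A^*_R(\mathcal{A})\to A^*_R(\mathcal{C}_s)$ with $\Delta_{tot}(e_i)=\tilde e_\alpha$ whenever $L_i\in\mathcal{A}_\alpha$ ($1\le\alpha\le s$).
   Context: The parallel class decomposition is the partition of $\mathcal{A}$ into classes such that two lines are parallel (including equal direction) iff they lie in the same class $\mathcal{A}_\alpha$. The Orlik–Solomon algebra $A^*_R(\mathcal{A})$ of an arrangement $\mathcal{A}=\{L_1,\dots,L_n\}$ of affine lines in $\mathbb{C}^2$ over a commutative ring $R$ is the graded $R$-algebra with $A^0_R=R$, $A^1_R=\bigoplus_{i=1}^n R e_i$, $A^2_R=\bigwedge^2 A^1_R/I$ where $I$ is the $R$-submodule generated by (i) $e_i\wedge e_j$ for each pair of parallel lines $L_i\parallel L_j$ and (ii) $e_i\wedge e_j-e_i\wedge e_k+e_j\wedge e_k$ for each triple of lines with $L_i\cap L_j\cap L_k\neq\emptyset$, and $A^q_R=0$ for $q\ge3$; multiplication is the wedge product. *)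

theory Defs
  imports Complex_Main "HOL-Algebra.QuotRing"
begin

type_synonym cpoint = "complex \<times> complex"

definition affine_line :: "cpoint set \<Rightarrow> bool" where
  "affine_line S \<longleftrightarrow>
     (\<exists>a b c :: complex. (a, b) \<noteq> (0, 0) \<and> S = {(x, y). a * x + b * y = c})"

definition parallel :: "cpoint set \<Rightarrow> cpoint set \<Rightarrow> bool" where
  "parallel S T \<longleftrightarrow> (\<exists>t1 t2 :: complex. T = (\<lambda>(x, y). (x + t1, y + t2)) ` S)"

definition line_arrangement :: "nat \<Rightarrow> (nat \<Rightarrow> cpoint set) \<Rightarrow> bool" where
  "line_arrangement n L \<longleftrightarrow> (\<forall>i<n. affine_line (L i)) \<and> inj_on L {..<n}"

definition central_arrangement :: "nat \<Rightarrow> (nat \<Rightarrow> cpoint set) \<Rightarrow> bool" where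
  "central_arrangement s C \<longleftrightarrow> line_arrangement s C \<and> (\<forall>a<s. (0, 0) \<in> C a)"

text \<open>Parallel class decomposition A = A_0 \<sqcup> ... \<sqcup> A_(s-1), encoded by the class
  label cls i of each line: two lines are parallel iff they lie in the same class,
  and every class is nonempty.\<close>
definition parallel_class_decomposition ::
  "nat \<Rightarrow> (nat \<Rightarrow> cpoint set) \<Rightarrow> nat \<Rightarrow> (nat \<Rightarrow> nat) \<Rightarrow> bool" where
  "parallel_class_decomposition n L s cls \<longleftrightarrow>
     (\<forall>i<n. cls i < s) \<and> (\<forall>a<s. \<exists>i<n. cls i = a) \<and>
     (\<forall>i<n. \<forall>j<n. cls i = cls j \<longleftrightarrow> parallel (L i) (L j))"

text \<open>An element is (c, v, w): c in degree 0, v i = coefficient of e_i,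
  w i j (i < j) = coefficient of e_i \<and> e_j.\<close>
type_synonym 'r ostriple = "'r \<times> (nat \<Rightarrow> 'r) \<times> (nat \<Rightarrow> nat \<Rightarrow> 'r)"

definition ext_carrier :: "nat \<Rightarrow> ('r::comm_ring_1) ostriple set" where
  "ext_carrier n = {(c, v, w). (\<forall>i. n \<le> i \<longrightarrow> v i = 0) \<and>
                                (\<forall>i j. \<not> (i < j \<and> j < n) \<longrightarrow> w i j = 0)}"

definition wedge :: "nat \<Rightarrow> (nat \<Rightarrow> 'r::comm_ring_1) \<Rightarrow> (nat \<Rightarrow> 'r) \<Rightarrow> nat \<Rightarrow> nat \<Rightarrow> 'r" where
  "wedge n v v' = (\<lambda>i j. if i < j \<and> j < n then v i * v' j - v j * v' i else 0)"

definition ext_mult :: "nat \<Rightarrow> ('r::comm_ring_1) ostriple \<Rightarrow> 'r ostriple \<Rightarrow> 'r ostriple" where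
  "ext_mult n x y = (case x of (c, v, w) \<Rightarrow> case y of (c', v', w') \<Rightarrow>
      (c * c', \<lambda>i. c * v' i + c' * v i, \<lambda>i j. c * w' i j + c' * w i j + wedge n v v' i j))"

definition ext_add :: "('r::comm_ring_1) ostriple \<Rightarrow> 'r ostriple \<Rightarrow> 'r ostriple" where
  "ext_add x y = (case x of (c, v, w) \<Rightarrow> case y of (c', v', w') \<Rightarrow>
      (c + c', \<lambda>i. v i + v' i, \<lambda>i j. w i j + w' i j))"

definition ext_ring :: "nat \<Rightarrow> ('r::comm_ring_1) ostriple ring" where
  "ext_ring n = \<lparr>carrier = ext_carrier n, monoid.mult = ext_mult n,
                 one = (1, \<lambda>_. 0, \<lambda>_ _. 0), zero = (0, \<lambda>_. 0, \<lambda>_ _. 0), add = ext_add\<rparr>"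

definition unit_vec :: "nat \<Rightarrow> nat \<Rightarrow> 'r::comm_ring_1" where
  "unit_vec i = (\<lambda>k. if k = i then 1 else 0)"

definition ew :: "nat \<Rightarrow> nat \<Rightarrow> nat \<Rightarrow> nat \<Rightarrow> nat \<Rightarrow> 'r::comm_ring_1" where
  "ew n i j = wedge n (unit_vec i) (unit_vec j)"

definition os_rel_gens :: "nat \<Rightarrow> (nat \<Rightarrow> cpoint set) \<Rightarrow> (nat \<Rightarrow> nat \<Rightarrow> 'r::comm_ring_1) set" where
  "os_rel_gens n L =
     {ew n i j | i j. i < n \<and> j < n \<and> parallel (L i) (L j)} \<union>
     {(\<lambda>a b. ew n i j a b - ew n i k a b + ew n j k a b) | i j k.
        i < n \<and> j < n \<and> k < n \<and> L i \<inter> L j \<inter> L k \<noteq> {}}"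

inductive_set r_span :: "(nat \<Rightarrow> nat \<Rightarrow> 'r::comm_ring_1) set \<Rightarrow> (nat \<Rightarrow> nat \<Rightarrow> 'r) set"
  for G where
  span_zero: "(\<lambda>_ _. 0) \<in> r_span G"
| span_add_gen: "w \<in> r_span G \<Longrightarrow> g \<in> G \<Longrightarrow> (\<lambda>a b. w a b + r * g a b) \<in> r_span G"

definition os_ideal :: "nat \<Rightarrow> (nat \<Rightarrow> cpoint set) \<Rightarrow> ('r::comm_ring_1) ostriple set" where
  "os_ideal n L = {(0, \<lambda>_. 0, w) | w. w \<in> r_span (os_rel_gens n L)}"

text \<open>A^*_R(A) = R \<oplus> A^1 \<oplus> \<Lambda>^2/I, with A^q = 0 for q \<ge> 3.\<close>
definition os_alg :: "nat \<Rightarrow> (nat \<Rightarrow> cpoint set) \<Rightarrow> ('r::comm_ring_1) ostriple set ring" where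
  "os_alg n L = ext_ring n Quot os_ideal n L"

definition os_gen :: "nat \<Rightarrow> (nat \<Rightarrow> cpoint set) \<Rightarrow> nat \<Rightarrow> ('r::comm_ring_1) ostriple set" where
  "os_gen n L i = a_r_coset (ext_ring n) (os_ideal n L) (0, unit_vec i, \<lambda>_ _. 0)"

definition os_scalar :: "nat \<Rightarrow> (nat \<Rightarrow> cpoint set) \<Rightarrow> 'r \<Rightarrow> ('r::comm_ring_1) ostriple set" where
  "os_scalar n L r = a_r_coset (ext_ring n) (os_ideal n L) (r, \<lambda>_. 0, \<lambda>_ _. 0)"

definition os_smult :: "nat \<Rightarrow> (nat \<Rightarrow> cpoint set) \<Rightarrow> 'r \<Rightarrow> ('r::comm_ring_1) ostriple set
    \<Rightarrow> 'r ostriple set" where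
  "os_smult n L r x = os_scalar n L r \<otimes>\<^bsub>os_alg n L\<^esub> x"

definition os_alg_homs :: "nat \<Rightarrow> (nat \<Rightarrow> cpoint set) \<Rightarrow> nat \<Rightarrow> (nat \<Rightarrow> cpoint set)
    \<Rightarrow> (('r::comm_ring_1) ostriple set \<Rightarrow> 'r ostriple set) set" where
  "os_alg_homs n L m M =
     {h. h \<in> ring_hom (os_alg n L) (os_alg m M) \<and>
         (\<forall>r x. x \<in> carrier (os_alg n L) \<longrightarrow> h (os_smult n L r x) = os_smult m M r (h x))}"

end

theory Submission
  imports Defs
begin


lemma ext_ring_simps[simp]:
  "carrier (ext_ring n) = ext_carrier n"
  "mult (ext_ring n) = ext_mult n"
  "one (ext_ring n) = (1, \<lambda>_. 0, \<lambda>_ _. 0)"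
  "zero (ext_ring n) = (0, \<lambda>_. 0, \<lambda>_ _. 0)"
  "add (ext_ring n) = ext_add"
  by (simp_all add: ext_ring_def)

lemma ext_carrier_iff: "(c, v, w) \<in> ext_carrier n \<longleftrightarrow>
   (\<forall>i. n \<le> i \<longrightarrow> v i = 0) \<and> (\<forall>i j. \<not> (i < j \<and> j < n) \<longrightarrow> w i j = 0)"
  by (simp add: ext_carrier_def)

lemma ext_add_simp[simp]: "ext_add (c, v, w) (c', v', w') = (c + c', \<lambda>i. v i + v' i, \<lambda>i j. w i j + w' i j)"
  by (simp add: ext_add_def)

lemma ext_mult_simp[simp]: "ext_mult n (c, v, w) (c', v', w') =
      (c * c', \<lambda>i. c * v' i + c' * v i, \<lambda>i j. c * w' i j + c' * w i j + wedge n v v' i j)"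
  by (simp add: ext_mult_def)

lemma wedge_out: "\<not> (i < j \<and> j < n) \<Longrightarrow> wedge n v v' i j = 0"
  by (auto simp add: wedge_def)

lemma ext_ring: "ring (ext_ring (n::nat) :: ('r::comm_ring_1) ostriple ring)"
proof (rule ringI)
  show "abelian_group (ext_ring n :: 'r ostriple ring)"
  proof (rule abelian_groupI, goal_cases)
    case (1 x y) then show ?case by (cases x; cases y) (auto simp: ext_carrier_iff)
  next
    case 2 then show ?case by (auto simp: ext_carrier_iff)
  next
    case (3 x y z) then show ?case by (cases x; cases y; cases z) (auto simp: algebra_simps)
  next
    case (4 x y) then show ?case by (cases x; cases y) (auto simp: algebra_simps)
  next
    case (5 x) then show ?case by (cases x) auto
  next
    case (6 x) then show ?case
      by (cases x) (auto simp: ext_carrier_iff intro!: bexI[of _ "(- fst x, \<lambda>i. - fst (snd x) i, \<lambda>i j. - snd (snd x) i j)"])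
  qed
next
  show "monoid (ext_ring n :: 'r ostriple ring)"
  proof (rule monoidI, goal_cases)
    case (1 x y) then show ?case by (cases x; cases y) (auto simp: ext_carrier_iff wedge_out)
  next
    case 2 then show ?case by (auto simp: ext_carrier_iff)
  next
    case (3 x y z) then show ?case
      by (cases x; cases y; cases z) (auto simp: algebra_simps wedge_def fun_eq_iff)
  next
    case (4 x) then show ?case by (cases x) (auto simp: wedge_def fun_eq_iff)
  next
    case (5 x) then show ?case by (cases x) (auto simp: wedge_def fun_eq_iff)
  qed
next
  fix x y z :: "'r ostriple"
  show "(x \<oplus>\<^bsub>ext_ring n\<^esub> y) \<otimes>\<^bsub>ext_ring n\<^esub> z = x \<otimes>\<^bsub>ext_ring n\<^esub> z \<oplus>\<^bsub>ext_ring n\<^esub> y \<otimes>\<^bsub>ext_ring n\<^esub> z"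
    by (cases x; cases y; cases z) (auto simp: algebra_simps wedge_def fun_eq_iff)
  show "z \<otimes>\<^bsub>ext_ring n\<^esub> (x \<oplus>\<^bsub>ext_ring n\<^esub> y) = z \<otimes>\<^bsub>ext_ring n\<^esub> x \<oplus>\<^bsub>ext_ring n\<^esub> z \<otimes>\<^bsub>ext_ring n\<^esub> y"
    by (cases x; cases y; cases z) (auto simp: algebra_simps wedge_def fun_eq_iff)
qed



lemma quot_induced_eq:
  fixes R (structure) and S (structure)
  assumes R: "ring R" and S: "ring S" and I: "ideal I R" and J: "ideal J S"
    and f: "f \<in> ring_hom R S" and fI: "f ` I \<subseteq> J"
    and x: "x \<in> carrier R"
  shows "J +>\<^bsub>S\<^esub> f (SOME y. y \<in> I +>\<^bsub>R\<^esub> x) = J +>\<^bsub>S\<^esub> f x"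
proof -
  interpret R: ideal I R by fact
  interpret S: ideal J S by fact
  have "x \<in> I +> x" using R.a_rcos_self[OF x] .
  hence "(SOME y. y \<in> I +> x) \<in> I +> x" by (rule someI)
  then obtain i where i: "i \<in> I" and y: "(SOME y. y \<in> I +> x) = i \<oplus> x"
    unfolding a_r_coset_def r_coset_def by auto
  have ic: "i \<in> carrier R" using R.a_Hcarr[OF i] .
  have fx: "f x \<in> carrier S" using ring_hom_closed[OF f x] .
  have fi: "f i \<in> J" using subsetD[OF fI imageI[OF i]] .
  have fic: "f i \<in> carrier S" using S.a_Hcarr[OF fi] .
  have e1: "f (SOME y. y \<in> I +> x) = f i \<oplus>\<^bsub>S\<^esub> f x" unfolding y using f ic x by (rule ring_hom_add)
  have "J +>\<^bsub>S\<^esub> (f i \<oplus>\<^bsub>S\<^esub> f x) = (J +>\<^bsub>S\<^esub> f i) +>\<^bsub>S\<^esub> f x"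
    using S.a_coset_add_assoc[OF S.a_subset fic fx] by (rule sym)
  also have "(J +>\<^bsub>S\<^esub> f i) +>\<^bsub>S\<^esub> f x = J +>\<^bsub>S\<^esub> f x" using S.a_rcos_const[OF fi] by (rule arg_cong)
  finally show ?thesis unfolding e1 .
qed

lemma quot_induced_hom:
  fixes R (structure) and S (structure)
  assumes R: "ring R" and S: "ring S" and I: "ideal I R" and J: "ideal J S"
    and f: "f \<in> ring_hom R S" and fI: "f ` I \<subseteq> J"
  shows "(\<lambda>X. J +>\<^bsub>S\<^esub> f (SOME y. y \<in> X)) \<in> ring_hom (R Quot I) (S Quot J)"
proof -
  interpret R: ideal I R by fact
  interpret S: ideal J S by fact
  note eq = quot_induced_eq[OF R S I J f fI]
  have fc: "\<And>x. x \<in> carrier R \<Longrightarrow> f x \<in> carrier S" using f by (rule ring_hom_closed)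
  have carr: "\<And>X. X \<in> carrier (R Quot I) \<Longrightarrow> \<exists>x\<in>carrier R. X = I +> x"
    unfolding FactRing_def A_RCOSETS_def' by simp
  show ?thesis
  proof (rule ring_hom_memI)
    fix X assume "X \<in> carrier (R Quot I)"
    from carr[OF this] obtain x where x: "x \<in> carrier R" "X = I +> x" ..
    have "J +>\<^bsub>S\<^esub> f x \<in> a_rcosets\<^bsub>S\<^esub> J" using S.a_rcosetsI[OF S.a_subset fc[OF x(1)]] .
    then show "J +>\<^bsub>S\<^esub> f (SOME y. y \<in> X) \<in> carrier (S Quot J)"
      unfolding x(2) eq[OF x(1)] by (simp add: FactRing_def)
  next
    fix X Y assume X: "X \<in> carrier (R Quot I)" and Y: "Y \<in> carrier (R Quot I)"
    from carr[OF X] obtain x where x: "x \<in> carrier R" "X = I +> x" ..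
    from carr[OF Y] obtain y where y: "y \<in> carrier R" "Y = I +> y" ..
    have m1: "X \<otimes>\<^bsub>R Quot I\<^esub> Y = I +> (x \<otimes> y)"
      unfolding x(2) y(2) using R.rcoset_mult_add[OF x(1) y(1)] by (simp add: FactRing_def)
    have m2: "(J +>\<^bsub>S\<^esub> f x) \<otimes>\<^bsub>S Quot J\<^esub> (J +>\<^bsub>S\<^esub> f y) = J +>\<^bsub>S\<^esub> (f x \<otimes>\<^bsub>S\<^esub> f y)"
      using S.rcoset_mult_add[OF fc[OF x(1)] fc[OF y(1)]] by (simp add: FactRing_def)
    have m3: "f (x \<otimes> y) = f x \<otimes>\<^bsub>S\<^esub> f y" using f x(1) y(1) by (rule ring_hom_mult)
    show "J +>\<^bsub>S\<^esub> f (SOME z. z \<in> X \<otimes>\<^bsub>R Quot I\<^esub> Y) =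
       (J +>\<^bsub>S\<^esub> f (SOME z. z \<in> X)) \<otimes>\<^bsub>S Quot J\<^esub> (J +>\<^bsub>S\<^esub> f (SOME z. z \<in> Y))"
      unfolding m1 eq[OF R.m_closed[OF x(1) y(1)]] m3 m2[symmetric]
      unfolding x(2) y(2) eq[OF x(1)] eq[OF y(1)] ..
    have a1: "X \<oplus>\<^bsub>R Quot I\<^esub> Y = I +> (x \<oplus> y)"
      unfolding x(2) y(2) using R.a_rcos_sum[OF x(1) y(1)] by (simp add: FactRing_def)
    have a2: "(J +>\<^bsub>S\<^esub> f x) \<oplus>\<^bsub>S Quot J\<^esub> (J +>\<^bsub>S\<^esub> f y) = J +>\<^bsub>S\<^esub> (f x \<oplus>\<^bsub>S\<^esub> f y)"
      using S.a_rcos_sum[OF fc[OF x(1)] fc[OF y(1)]] by (simp add: FactRing_def)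
    have a3: "f (x \<oplus> y) = f x \<oplus>\<^bsub>S\<^esub> f y" using f x(1) y(1) by (rule ring_hom_add)
    show "J +>\<^bsub>S\<^esub> f (SOME z. z \<in> X \<oplus>\<^bsub>R Quot I\<^esub> Y) =
       (J +>\<^bsub>S\<^esub> f (SOME z. z \<in> X)) \<oplus>\<^bsub>S Quot J\<^esub> (J +>\<^bsub>S\<^esub> f (SOME z. z \<in> Y))"
      unfolding a1 eq[OF R.a_closed[OF x(1) y(1)]] a3 a2[symmetric]
      unfolding x(2) y(2) eq[OF x(1)] eq[OF y(1)] ..
  next
    have "\<one>\<^bsub>R Quot I\<^esub> = I +> \<one>" by (simp add: FactRing_def)
    moreover have "f \<one> = \<one>\<^bsub>S\<^esub>" using f by (rule ring_hom_one)
    ultimately show "J +>\<^bsub>S\<^esub> f (SOME y. y \<in> \<one>\<^bsub>R Quot I\<^esub>) = \<one>\<^bsub>S Quot J\<^esub>"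
      using eq[OF R.one_closed] by (simp add: FactRing_def)
  qed
qed



lemma span_add: "w \<in> r_span G \<Longrightarrow> u \<in> r_span G \<Longrightarrow> (\<lambda>a b. u a b + w a b) \<in> r_span G"
proof (induction w rule: r_span.induct)
  case span_zero then show ?case by simp
next
  case (span_add_gen w g r)
  then have "(\<lambda>a b. (\<lambda>a b. u a b + w a b) a b + r * g a b) \<in> r_span G"
    by (intro r_span.span_add_gen) auto
  then show ?case by (simp add: add.assoc)
qed

lemma span_smult: "w \<in> r_span G \<Longrightarrow> (\<lambda>a b. c * w a b) \<in> r_span G"
proof (induction w rule: r_span.induct)
  case span_zero then show ?case by (simp add: r_span.span_zero)
next
  case (span_add_gen w g r)
  then have "(\<lambda>a b. (\<lambda>a b. c * w a b) a b + (c * r) * g a b) \<in> r_span G"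
    by (intro r_span.span_add_gen) auto
  then show ?case by (simp add: algebra_simps)
qed

lemma span_gen: "g \<in> G \<Longrightarrow> g \<in> r_span G"
  using r_span.span_add_gen[OF r_span.span_zero, of g G 1] by simp

lemma span_out: "w \<in> r_span G \<Longrightarrow> \<forall>g\<in>G. \<forall>i j. \<not> (i < j \<and> j < n) \<longrightarrow> g i j = 0
   \<Longrightarrow> \<forall>i j. \<not> (i < j \<and> j < n) \<longrightarrow> w i j = 0"
  by (induction w rule: r_span.induct) auto

lemma ew_out: "\<not> (a < b \<and> b < n) \<Longrightarrow> ew n i j a b = 0"
  by (auto simp add: ew_def wedge_def)

lemma gens_out: "\<forall>g\<in>os_rel_gens n L. \<forall>i j. \<not> (i < j \<and> j < n) \<longrightarrow> g i j = 0"
  unfolding os_rel_gens_def by (auto simp: ew_out)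

lemma span_os_out: "w \<in> r_span (os_rel_gens n L) \<Longrightarrow> \<not> (i < j \<and> j < n) \<Longrightarrow> w i j = 0"
  using span_out[OF _ gens_out] by blast

lemma os_ideal_sub: "os_ideal n L \<subseteq> ext_carrier n"
  unfolding os_ideal_def by (auto simp: ext_carrier_iff span_os_out)

lemma os_ideal_ideal: "ideal (os_ideal n L) (ext_ring n :: ('r::comm_ring_1) ostriple ring)"
proof -
  interpret ring "ext_ring n :: 'r ostriple ring" by (rule ext_ring)
  show ?thesis
  proof (rule idealI)
    show "ring (ext_ring n :: 'r ostriple ring)" by (rule ext_ring)
  next
    show "subgroup (os_ideal n L) (add_monoid (ext_ring n :: 'r ostriple ring))"
    proof (rule add.subgroupI)
      show "os_ideal n L \<subseteq> carrier (ext_ring n :: 'r ostriple ring)" using os_ideal_sub by simp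
      show "os_ideal n L \<noteq> {}" unfolding os_ideal_def using r_span.span_zero by blast
    next
      fix a :: "'r ostriple" assume a: "a \<in> os_ideal n L"
      then obtain w where w: "a = (0, \<lambda>_. 0, w)" "w \<in> r_span (os_rel_gens n L)"
        unfolding os_ideal_def by blast
      have m: "(0, \<lambda>_. 0, \<lambda>a b. (-1) * w a b) \<in> os_ideal n L"
        unfolding os_ideal_def using span_smult[OF w(2)] by blast
      have "\<ominus>\<^bsub>ext_ring n\<^esub> a = (0, \<lambda>_. 0, \<lambda>a b. (-1) * w a b)"
        apply (rule add.inv_equality)
        using a m os_ideal_sub by (auto simp: w)
      then show "\<ominus>\<^bsub>ext_ring n\<^esub> a \<in> os_ideal n L" using m by simp
    next
      fix a b :: "'r ostriple" assume "a \<in> os_ideal n L" "b \<in> os_ideal n L"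
      then obtain w u where "a = (0, \<lambda>_. 0, w)" "w \<in> r_span (os_rel_gens n L)"
         "b = (0, \<lambda>_. 0, u)" "u \<in> r_span (os_rel_gens n L)"
        unfolding os_ideal_def by blast
      then show "a \<oplus>\<^bsub>ext_ring n\<^esub> b \<in> os_ideal n L"
        using span_add[of u _ w] unfolding os_ideal_def by auto
    qed
  next
    fix a x :: "'r ostriple" assume a: "a \<in> os_ideal n L" and x: "x \<in> carrier (ext_ring n)"
    obtain w where w: "a = (0, \<lambda>_. 0, w)" "w \<in> r_span (os_rel_gens n L)"
      using a unfolding os_ideal_def by blast
    obtain c v u where x': "x = (c, v, u)" by (cases x)
    have "x \<otimes>\<^bsub>ext_ring n\<^esub> a = (0, \<lambda>_. 0, \<lambda>a b. c * w a b)"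
      by (simp add: w x' wedge_def fun_eq_iff)
    moreover have "a \<otimes>\<^bsub>ext_ring n\<^esub> x = (0, \<lambda>_. 0, \<lambda>a b. c * w a b)"
      by (simp add: w x' wedge_def fun_eq_iff)
    moreover have "(0, \<lambda>_. 0, \<lambda>a b. c * w a b) \<in> os_ideal n L"
      unfolding os_ideal_def using span_smult[OF w(2)] by blast
    ultimately show "x \<otimes>\<^bsub>ext_ring n\<^esub> a \<in> os_ideal n L" "a \<otimes>\<^bsub>ext_ring n\<^esub> x \<in> os_ideal n L"
      by simp_all
  qed
qed



definition phi :: "nat \<Rightarrow> nat \<Rightarrow> (nat \<Rightarrow> nat) \<Rightarrow> (nat \<Rightarrow> 'r::comm_ring_1) \<Rightarrow> nat \<Rightarrow> 'r" where
  "phi n s cls v = (\<lambda>a. if a < s then (\<Sum>i<n. if cls i = a then v i else 0) else 0)"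

definition gmap :: "nat \<Rightarrow> nat \<Rightarrow> (nat \<Rightarrow> nat) \<Rightarrow> (nat \<Rightarrow> nat \<Rightarrow> 'r::comm_ring_1) \<Rightarrow> nat \<Rightarrow> nat \<Rightarrow> 'r" where
  "gmap n s cls w = (\<lambda>a b. \<Sum>i<n. \<Sum>j<n. w i j * ew s (cls i) (cls j) a b)"

lemma pair_sum:
  fixes T :: "nat \<Rightarrow> nat \<Rightarrow> 'r::comm_ring_1"
  assumes "\<And>i. T i i = 0"
  shows "(\<Sum>i<n. \<Sum>j<n. if i < j then T i j + T j i else 0) = (\<Sum>i<n. \<Sum>j<n. T i j)"
proof -
  have "(\<Sum>i<n. \<Sum>j<n. T i j) = (\<Sum>i<n. \<Sum>j<n. (if i < j then T i j else 0) + (if j < i then T i j else 0))"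
    by (intro sum.cong refl) (auto simp: assms dest: not_less_iff_gr_or_eq[THEN iffD1])
  also have "\<dots> = (\<Sum>i<n. \<Sum>j<n. if i < j then T i j else 0) + (\<Sum>i<n. \<Sum>j<n. if j < i then T i j else 0)"
    by (simp add: sum.distrib)
  also have "(\<Sum>i<n. \<Sum>j<n. if j < i then T i j else 0) = (\<Sum>j<n. \<Sum>i<n. if j < i then T i j else 0)"
    by (rule sum.swap)
  also have "(\<Sum>i<n. \<Sum>j<n. if i < j then T i j else 0) + (\<Sum>j<n. \<Sum>i<n. if j < i then T i j else 0)
      = (\<Sum>i<n. \<Sum>j<n. if i < j then T i j + T j i else 0)"
    by (simp add: sum.distrib[symmetric]) (intro sum.cong refl; simp)
  finally show ?thesis ..
qed

lemma ew_swap: "ew s q p a b = - ew s p q a b"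
  by (simp add: ew_def wedge_def)

lemma ew_diag: "ew s p p a b = 0"
  by (simp add: ew_def wedge_def)

lemma gmap_wedge:
  fixes v v' :: "nat \<Rightarrow> 'r::comm_ring_1"
  shows "gmap n s cls (wedge n v v') = wedge s (phi n s cls v) (phi n s cls v')"
proof (intro ext)
  fix a b
  define E :: "nat \<Rightarrow> nat \<Rightarrow> 'r" where "E i j = ew s (cls i) (cls j) a b" for i j
  define T where "T i j = v i * v' j * E i j" for i j
  have T0: "T i i = 0" for i by (simp add: T_def E_def ew_diag)
  have "gmap n s cls (wedge n v v') a b = (\<Sum>i<n. \<Sum>j<n. if i < j then T i j + T j i else 0)"
    unfolding gmap_def
  proof (intro sum.cong refl)
    fix i j assume "i \<in> {..<n}" "j \<in> {..<n}"
    have Es: "E j i = - E i j" unfolding E_def by (rule ew_swap)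
    show "wedge n v v' i j * ew s (cls i) (cls j) a b = (if i < j then T i j + T j i else 0)"
      unfolding E_def[symmetric] T_def Es using \<open>j \<in> {..<n}\<close> by (simp add: wedge_def algebra_simps)
  qed
  also have "\<dots> = (\<Sum>i<n. \<Sum>j<n. T i j)" using pair_sum[of T n] T0 by blast
  also have "\<dots> = wedge s (phi n s cls v) (phi n s cls v') a b"
  proof (cases "a < b \<and> b < s")
    case True
    have Eij: "E i j = (if cls i = a \<and> cls j = b then 1 else 0) - (if cls i = b \<and> cls j = a then 1 else 0)" for i j
      using True by (auto simp: E_def ew_def wedge_def unit_vec_def)
    have "wedge s (phi n s cls v) (phi n s cls v') a b =
      (\<Sum>i<n. if cls i = a then v i else 0) * (\<Sum>j<n. if cls j = b then v' j else 0) -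
      (\<Sum>i<n. if cls i = b then v i else 0) * (\<Sum>j<n. if cls j = a then v' j else 0)"
      using True by (simp add: wedge_def phi_def)
    also have "\<dots> = (\<Sum>i<n. \<Sum>j<n. (if cls i = a then v i else 0) * (if cls j = b then v' j else 0) -
       (if cls i = b then v i else 0) * (if cls j = a then v' j else 0))"
      by (simp add: sum_product sum_subtractf)
    also have "\<dots> = (\<Sum>i<n. \<Sum>j<n. T i j)"
      unfolding T_def Eij by (intro sum.cong refl) (auto simp: algebra_simps)
    finally show ?thesis ..
  next
    case False
    then have "E i j = 0" for i j by (simp add: E_def ew_out)
    then show ?thesis using False by (auto simp: T_def wedge_def)
  qed
  finally show "gmap n s cls (wedge n v v') a b = wedge s (phi n s cls v) (phi n s cls v') a b" .
qed



definition fmap :: "nat \<Rightarrow> nat \<Rightarrow> (nat \<Rightarrow> nat) \<Rightarrow> ('r::comm_ring_1) ostriple \<Rightarrow> 'r ostriple" where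
  "fmap n s cls x = (case x of (c, v, w) \<Rightarrow> (c, phi n s cls v, gmap n s cls w))"

lemma fmap_simp[simp]: "fmap n s cls (c, v, w) = (c, phi n s cls v, gmap n s cls w)"
  by (simp add: fmap_def)

lemma phi_lin: "phi n s cls (\<lambda>i. c * x i + d * y i) = (\<lambda>a. c * phi n s cls x a + d * phi n s cls y a)"
  by (auto simp: phi_def fun_eq_iff sum_distrib_left sum.distrib[symmetric] intro!: sum.cong)

lemma phi_add: "phi n s cls (\<lambda>i. x i + y i) = (\<lambda>a. phi n s cls x a + phi n s cls y a)"
  by (auto simp: phi_def fun_eq_iff sum.distrib[symmetric] intro!: sum.cong)

lemma phi_zero: "phi n s cls (\<lambda>_. 0) = (\<lambda>_. 0)"
  by (simp add: phi_def fun_eq_iff)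

lemma gmap_lin: "gmap n s cls (\<lambda>i j. c * x i j + d * y i j + z i j)
   = (\<lambda>a b. c * gmap n s cls x a b + d * gmap n s cls y a b + gmap n s cls z a b)"
  by (simp add: gmap_def fun_eq_iff sum_distrib_left sum.distrib algebra_simps)

lemma gmap_add: "gmap n s cls (\<lambda>i j. x i j + y i j) = (\<lambda>a b. gmap n s cls x a b + gmap n s cls y a b)"
  by (simp add: gmap_def fun_eq_iff sum.distrib algebra_simps)

lemma gmap_addsm: "gmap n s cls (\<lambda>i j. x i j + r * y i j) = (\<lambda>a b. gmap n s cls x a b + r * gmap n s cls y a b)"
  by (simp add: gmap_def fun_eq_iff sum.distrib sum_distrib_left algebra_simps)

lemma gmap_lin3: "gmap n s cls (\<lambda>i j. x i j - y i j + z i j)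
   = (\<lambda>a b. gmap n s cls x a b - gmap n s cls y a b + gmap n s cls z a b)"
  by (simp add: gmap_def fun_eq_iff sum.distrib sum_subtractf algebra_simps)

lemma gmap_zero: "gmap n s cls (\<lambda>_ _. 0) = (\<lambda>_ _. 0)"
  by (simp add: gmap_def fun_eq_iff)

lemma phi_unit: assumes "i < n" "cls i < s"
  shows "phi n s cls (unit_vec i) = unit_vec (cls i)"
proof (rule ext)
  fix a
  have "(\<Sum>k<n. if cls k = a then unit_vec i k else 0) = (\<Sum>k<n. if k = i then (if cls i = a then 1 else 0) else 0)"
    by (intro sum.cong refl) (auto simp: unit_vec_def)
  also have "\<dots> = (if cls i = a then 1 else 0)" using assms(1) by simp
  finally have eq: "(\<Sum>k<n. if cls k = a then unit_vec i k else 0) = (if cls i = a then 1 else (0::'a))" .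
  have "phi n s cls (unit_vec i) a = (if a < s then (if cls i = a then 1 else 0) else (0::'a))"
    unfolding phi_def eq ..
  then show "phi n s cls (unit_vec i) a = (unit_vec (cls i) a :: 'a)"
    using assms(2) by (auto simp: unit_vec_def)
qed

lemma gmap_ew: assumes "i < n" "j < n" "cls i < s" "cls j < s"
  shows "gmap n s cls (ew n i j) = (ew s (cls i) (cls j) :: nat \<Rightarrow> nat \<Rightarrow> 'r::comm_ring_1)"
  unfolding ew_def gmap_wedge using phi_unit assms by metis

lemma fmap_hom:
  assumes H1: "\<forall>i<n. cls i < s"
  shows "fmap n s cls \<in> ring_hom (ext_ring n :: ('r::comm_ring_1) ostriple ring) (ext_ring s)"
proof (rule ring_hom_memI)
  fix x :: "'r ostriple" assume "x \<in> carrier (ext_ring n)"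
  obtain c v w where x: "x = (c, v, w)" by (cases x)
  show "fmap n s cls x \<in> carrier (ext_ring s)"
    by (auto simp: x ext_carrier_iff phi_def gmap_def ew_out)
next
  fix x y :: "'r ostriple"
  obtain c v w where x: "x = (c, v, w)" by (cases x)
  obtain c' v' w' where y: "y = (c', v', w')" by (cases y)
  show "fmap n s cls (x \<otimes>\<^bsub>ext_ring n\<^esub> y) = fmap n s cls x \<otimes>\<^bsub>ext_ring s\<^esub> fmap n s cls y"
    by (simp add: x y phi_lin gmap_lin gmap_wedge)
  show "fmap n s cls (x \<oplus>\<^bsub>ext_ring n\<^esub> y) = fmap n s cls x \<oplus>\<^bsub>ext_ring s\<^esub> fmap n s cls y"
    by (simp add: x y phi_add gmap_add)
next
  show "fmap n s cls \<one>\<^bsub>ext_ring n\<^esub> = (\<one>\<^bsub>ext_ring s\<^esub> :: 'r ostriple)"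
    by (simp add: phi_zero gmap_zero)
qed

lemma gmap_gen:
  assumes H1: "\<forall>i<n. cls i < s"
    and H2: "\<forall>i<n. \<forall>j<n. parallel (L i) (L j) \<longrightarrow> cls i = cls j"
    and H3: "\<forall>a<s. (0, 0) \<in> C a"
    and g: "g \<in> os_rel_gens n L"
  shows "gmap n s cls g \<in> r_span (os_rel_gens s C :: (nat \<Rightarrow> nat \<Rightarrow> 'r::comm_ring_1) set)"
proof -
  consider (P) i j where "g = ew n i j" "i < n" "j < n" "parallel (L i) (L j)"
    | (T) i j k where "g = (\<lambda>a b. ew n i j a b - ew n i k a b + ew n j k a b)"
        "i < n" "j < n" "k < n" "L i \<inter> L j \<inter> L k \<noteq> {}"
    using g unfolding os_rel_gens_def by fast
  then show ?thesis
  proof cases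
    case P
    have "gmap n s cls g = (ew s (cls i) (cls j) :: nat \<Rightarrow> nat \<Rightarrow> 'r)"
      unfolding P(1) by (rule gmap_ew[OF P(2) P(3) H1[rule_format, OF P(2)] H1[rule_format, OF P(3)]])
    also have "\<dots> = (\<lambda>_ _. 0)" using H2 P by (auto simp: fun_eq_iff ew_diag)
    finally show ?thesis by (simp add: r_span.span_zero)
  next
    case T
    have "gmap n s cls g = (\<lambda>a b. ew s (cls i) (cls j) a b - ew s (cls i) (cls k) a b + ew s (cls j) (cls k) a b :: 'r)"
      unfolding T(1) gmap_lin3 gmap_ew[OF T(2) T(3) H1[rule_format, OF T(2)] H1[rule_format, OF T(3)]]
        gmap_ew[OF T(2) T(4) H1[rule_format, OF T(2)] H1[rule_format, OF T(4)]]
        gmap_ew[OF T(3) T(4) H1[rule_format, OF T(3)] H1[rule_format, OF T(4)]] ..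
    moreover have "(\<lambda>a b. ew s (cls i) (cls j) a b - ew s (cls i) (cls k) a b + ew s (cls j) (cls k) a b :: 'r)
        \<in> os_rel_gens s C"
    proof -
      have ci: "cls i < s" "cls j < s" "cls k < s" using H1 T by auto
      have "(0, 0) \<in> C (cls i) \<inter> C (cls j) \<inter> C (cls k)" using H3 ci by simp
      then have ne: "C (cls i) \<inter> C (cls j) \<inter> C (cls k) \<noteq> {}" by (intro notI) simp
      show ?thesis unfolding os_rel_gens_def
        by (rule UnI2, rule CollectI, intro exI[of _ "cls i"] exI[of _ "cls j"] exI[of _ "cls k"] conjI refl ci ne)
    qed
    ultimately show ?thesis by (simp add: span_gen)
  qed
qed

lemma fmap_ideal:
  assumes H1: "\<forall>i<n. cls i < s"
    and H2: "\<forall>i<n. \<forall>j<n. parallel (L i) (L j) \<longrightarrow> cls i = cls j"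
    and H3: "\<forall>a<s. (0, 0) \<in> C a"
  shows "fmap n s cls ` (os_ideal n L :: ('r::comm_ring_1) ostriple set) \<subseteq> os_ideal s C"
proof -
  have "gmap n s cls w \<in> r_span (os_rel_gens s C :: (nat \<Rightarrow> nat \<Rightarrow> 'r) set)"
    if "w \<in> r_span (os_rel_gens n L)" for w :: "nat \<Rightarrow> nat \<Rightarrow> 'r"
    using that
  proof (induction w rule: r_span.induct)
    case span_zero then show ?case by (simp add: gmap_zero r_span.span_zero)
  next
    case (span_add_gen w g r)
    have "(\<lambda>a b. gmap n s cls w a b + r * gmap n s cls g a b) \<in> r_span (os_rel_gens s C)"
      using span_add[OF span_smult[OF gmap_gen[OF H1 H2 H3 span_add_gen(2)]] span_add_gen(3)] by simp
    then show ?case by (simp add: gmap_addsm)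
  qed
  then show ?thesis unfolding os_ideal_def by (auto simp: phi_zero)
qed



theorem theorem3p1:
  fixes n s :: nat and L C :: "nat \<Rightarrow> cpoint set" and cls :: "nat \<Rightarrow> nat"
  assumes "line_arrangement n L"
    and "parallel_class_decomposition n L s cls"
    and "central_arrangement s C"
  shows "\<exists>\<Delta>. \<Delta> \<in> (os_alg_homs n L s C :: ('r::comm_ring_1 ostriple set \<Rightarrow> 'r ostriple set) set) \<and>
             (\<forall>i<n. \<Delta> (os_gen n L i) = os_gen s C (cls i))"
proof -
  have H1: "\<forall>i<n. cls i < s" using assms(2) by (simp add: parallel_class_decomposition_def)
  have H2: "\<forall>i<n. \<forall>j<n. parallel (L i) (L j) \<longrightarrow> cls i = cls j"
    using assms(2) by (simp add: parallel_class_decomposition_def)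
  have H3: "\<forall>a<s. (0, 0) \<in> C a" using assms(3) by (simp add: central_arrangement_def)
  let ?I = "os_ideal n L :: 'r ostriple set"
  let ?J = "os_ideal s C :: 'r ostriple set"
  let ?f = "fmap n s cls :: 'r ostriple \<Rightarrow> 'r ostriple"
  define \<Delta> where "\<Delta> = (\<lambda>X. ?J +>\<^bsub>ext_ring s\<^esub> ?f (SOME y. y \<in> X))"
  have Rn: "ring (ext_ring n :: 'r ostriple ring)" by (rule ext_ring)
  have Rs: "ring (ext_ring s :: 'r ostriple ring)" by (rule ext_ring)
  have In: "ideal ?I (ext_ring n)" by (rule os_ideal_ideal)
  have Is: "ideal ?J (ext_ring s)" by (rule os_ideal_ideal)
  have fh: "?f \<in> ring_hom (ext_ring n) (ext_ring s)" by (rule fmap_hom[OF H1])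
  have fI: "?f ` ?I \<subseteq> ?J" by (rule fmap_ideal[OF H1 H2 H3])
  have hom: "\<Delta> \<in> ring_hom (os_alg n L :: 'r ostriple set ring) (os_alg s C)"
    unfolding \<Delta>_def os_alg_def by (rule quot_induced_hom[OF Rn Rs In Is fh fI])
  have eq: "\<And>x. x \<in> carrier (ext_ring n) \<Longrightarrow> \<Delta> (?I +>\<^bsub>ext_ring n\<^esub> x) = ?J +>\<^bsub>ext_ring s\<^esub> ?f x"
    unfolding \<Delta>_def by (rule quot_induced_eq[OF Rn Rs In Is fh fI])
  have sc: "(r, \<lambda>_. 0, \<lambda>_ _. 0) \<in> carrier (ext_ring n :: 'r ostriple ring)" for r :: 'r
    by (simp add: ext_carrier_iff)
  have scal: "\<Delta> (os_scalar n L r) = os_scalar s C r" for r :: 'r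
    unfolding os_scalar_def eq[OF sc] by (simp add: phi_zero gmap_zero)
  have scal_c: "os_scalar n L r \<in> carrier (os_alg n L :: 'r ostriple set ring)" for r :: 'r
  proof -
    interpret ideal ?I "ext_ring n" by (rule In)
    show ?thesis unfolding os_scalar_def os_alg_def FactRing_def
      using a_rcosetsI[OF a_subset sc] by simp
  qed
  have lin: "\<forall>(r::'r) x. x \<in> carrier (os_alg n L :: 'r ostriple set ring) \<longrightarrow> \<Delta> (os_smult n L r x) = os_smult s C r (\<Delta> x)"
  proof (intro allI impI)
    fix r :: 'r and x assume x: "x \<in> carrier (os_alg n L :: 'r ostriple set ring)"
    show "\<Delta> (os_smult n L r x) = os_smult s C r (\<Delta> x)"
      unfolding os_smult_def ring_hom_mult[OF hom scal_c x] scal ..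
  qed
  have gen: "\<forall>i<n. \<Delta> (os_gen n L i) = os_gen s C (cls i)"
  proof (intro allI impI)
    fix i assume i: "i < n"
    have c: "(0, unit_vec i, \<lambda>_ _. 0) \<in> carrier (ext_ring n :: 'r ostriple ring)"
      using i by (simp add: ext_carrier_iff unit_vec_def)
    show "\<Delta> (os_gen n L i) = os_gen s C (cls i)"
    proof -
      have pu: "phi n s cls (unit_vec i) = (unit_vec (cls i) :: nat \<Rightarrow> 'r)"
        using i H1 by (intro phi_unit) auto
      show ?thesis unfolding os_gen_def eq[OF c] by (simp add: gmap_zero pu)
    qed
  qed
  show ?thesis using hom lin gen unfolding os_alg_homs_def by blast
qed

end
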